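(* The semigroup $Q_3(sl_3(\mathbb{C}))$ of BZ triangles is generated by the eight elements $X, Y, P_{12},P_{23},P_{31},P_{21},P_{32},P_{13}$, where $X$ is the unique element with boundary weights $(\omega_1,\omega_1,\omega_1)$, $Y$ the unique element with boundary weights $(\omega_2,\omega_2,\omega_2)$, and for distinct $i,j\in\{1,2,3\}$, $P_{ij}$ is the unique element whose boundary weight on side $i$ is $\omega_1$, on side $j$ is $\omega_2$, and on the remaining side is $0$. The only relation among them is $X+Y=P_{12}+P_{23}+P_{31}$; that is, $\mathbb{C}[Q_3(sl_3(\mathbb{C}))]\cong\mathbb{C}[x,y,p_{12},p_{23},p_{31},p_{21},p_{32},p_{13}]/(xy-p_{12}p_{23}p_{31})$.
   Context: A Berenstein–Zelevinsky (BZ) triangle for $sl_3(\mathbb{C})$ is a $9$-tuple of nonnegative integers $(a,b,c,d,e,f,g,h,i)$ placed on the vertices of a triangular diagram with rows $a$; $b\ c$; $d\ e$; $f\ g\ h\ i$, so that the sides of the big triangle, oriented counterclockwise, read: side 1 $=(a,b,d,f)$, side 2 $=(f,g,h,i)$, side 3 $=(i,e,c,a)$, and $b,c,e,h,g,d$ (in this cyclic order) form a central hexagon. The entries must satisfy the hexagon conditions $b+c=g+h$, $c+e=d+g$, $e+h=b+d$. The boundary weight of a side read as $(x_1,x_2,x_3,x_4)$ is $(x_1+x_2)\omega_1+(x_3+x_4)\omega_2$, with $\omega_1,\omega_2$ the fundamental weights of $sl_3(\mathbb{C})$. $Q_3(sl_3(\mathbb{C}))$ is the semigroup of BZ triangles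 under entrywise addition. *)

theory Defs
  imports Main
begin

text \<open>The nine vertices of the BZ diagram: rows a; b c; d e; f g h i.\<close>
datatype vtx = Va | Vb | Vc | Vd | Ve | Vf | Vg | Vh | Vi

type_synonym tri = "vtx \<Rightarrow> nat"

definition hexagon :: "tri \<Rightarrow> bool" where
  "hexagon t \<longleftrightarrow> t Vb + t Vc = t Vg + t Vh \<and> t Vc + t Ve = t Vd + t Vg
                 \<and> t Ve + t Vh = t Vb + t Vd"

definition BZ :: "tri set" where
  "BZ = {t. hexagon t}"

text \<open>A weight m1*omega1 + m2*omega2 is encoded as the pair (m1, m2).\<close>
type_synonym wt = "nat \<times> nat"

definition side_wt :: "nat \<Rightarrow> nat \<Rightarrow> nat \<Rightarrow> nat \<Rightarrow> wt" where
  "side_wt x1 x2 x3 x4 = (x1 + x2, x3 + x4)"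

definition bweights :: "tri \<Rightarrow> wt \<times> wt \<times> wt" where
  "bweights t = (side_wt (t Va) (t Vb) (t Vd) (t Vf),
                 side_wt (t Vf) (t Vg) (t Vh) (t Vi),
                 side_wt (t Vi) (t Ve) (t Vc) (t Va))"

definition \<omega>1 :: wt where "\<omega>1 = (1, 0)"
definition \<omega>2 :: wt where "\<omega>2 = (0, 1)"
definition \<omega>0 :: wt where "\<omega>0 = (0, 0)"

datatype gen = GX | GY | P12 | P23 | P31 | P21 | P32 | P13

fun gen_wts :: "gen \<Rightarrow> wt \<times> wt \<times> wt" where
  "gen_wts GX  = (\<omega>1, \<omega>1, \<omega>1)"
| "gen_wts GY  = (\<omega>2, \<omega>2, \<omega>2)"
| "gen_wts P12 = (\<omega>1, \<omega>2, \<omega>0)"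
| "gen_wts P23 = (\<omega>0, \<omega>1, \<omega>2)"
| "gen_wts P31 = (\<omega>2, \<omega>0, \<omega>1)"
| "gen_wts P21 = (\<omega>2, \<omega>1, \<omega>0)"
| "gen_wts P32 = (\<omega>0, \<omega>2, \<omega>1)"
| "gen_wts P13 = (\<omega>1, \<omega>0, \<omega>2)"

definition gen_elem :: "gen \<Rightarrow> tri" where
  "gen_elem g = (THE t. t \<in> BZ \<and> bweights t = gen_wts g)"

definition eval :: "(gen \<Rightarrow> nat) \<Rightarrow> tri" where
  "eval c = (\<lambda>v. \<Sum>g\<in>UNIV. c g * gen_elem g v)"

definition unit_vec :: "gen \<Rightarrow> gen \<Rightarrow> nat" where
  "unit_vec g = (\<lambda>h. if h = g then 1 else 0)"

definition addv :: "(gen \<Rightarrow> nat) \<Rightarrow> (gen \<Rightarrow> nat) \<Rightarrow> gen \<Rightarrow> nat" where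
  "addv c d = (\<lambda>h. c h + d h)"

inductive rel :: "(gen \<Rightarrow> nat) \<Rightarrow> (gen \<Rightarrow> nat) \<Rightarrow> bool" where
  base: "rel (addv (unit_vec GX) (unit_vec GY))
             (addv (unit_vec P12) (addv (unit_vec P23) (unit_vec P31)))"
| refl: "rel c c"
| sym: "rel c d \<Longrightarrow> rel d c"
| trans: "rel c d \<Longrightarrow> rel d e \<Longrightarrow> rel c e"
| add: "rel c d \<Longrightarrow> rel (addv c e) (addv d e)"

end

theory Submission
  imports Defs
begin

lemma tri_eq: "(t::tri) = s \<longleftrightarrow> t Va = s Va \<and> t Vb = s Vb \<and> t Vc = s Vc \<and> t Vd = s Vd
   \<and> t Ve = s Ve \<and> t Vf = s Vf \<and> t Vg = s Vg \<and> t Vh = s Vh \<and> t Vi = s Vi"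
  apply (rule iffI, simp)
  apply (rule ext)
  subgoal for v by (cases v) auto
  done

lemma gfun_eq: "(c::gen \<Rightarrow> nat) = d \<longleftrightarrow> c GX = d GX \<and> c GY = d GY \<and> c P12 = d P12 \<and> c P23 = d P23
   \<and> c P31 = d P31 \<and> c P21 = d P21 \<and> c P32 = d P32 \<and> c P13 = d P13"
  apply (rule iffI, simp)
  apply (rule ext)
  subgoal for v by (cases v) auto
  done

lemma UNIV_gen: "(UNIV::gen set) = {GX,GY,P12,P23,P31,P21,P32,P13}"
  apply auto subgoal for x by (cases x) auto done

fun gv :: "gen \<Rightarrow> tri" where
  "gv GX = (\<lambda>v. if v = Vb \<or> v = Ve \<or> v = Vg then 1 else 0)"
| "gv GY = (\<lambda>v. if v = Vc \<or> v = Vd \<or> v = Vh then 1 else 0)"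
| "gv P12 = (\<lambda>v. if v = Vb \<or> v = Vh then 1 else 0)"
| "gv P23 = (\<lambda>v. if v = Vc \<or> v = Vg then 1 else 0)"
| "gv P31 = (\<lambda>v. if v = Vd \<or> v = Ve then 1 else 0)"
| "gv P21 = (\<lambda>v. if v = Vf then 1 else 0)"
| "gv P32 = (\<lambda>v. if v = Vi then 1 else 0)"
| "gv P13 = (\<lambda>v. if v = Va then 1 else 0)"

lemma gen_char: "(t \<in> BZ \<and> bweights t = gen_wts g) \<longleftrightarrow> t = gv g"
  by (cases g) (auto simp: tri_eq BZ_def hexagon_def bweights_def side_wt_def \<omega>1_def \<omega>2_def \<omega>0_def)

lemma gen_elem_gv: "gen_elem g = gv g"
  unfolding gen_elem_def gen_char by simp

lemma eval_vals:
  "eval c Va = c P13" "eval c Vb = c GX + c P12" "eval c Vc = c GY + c P23"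
  "eval c Vd = c GY + c P31" "eval c Ve = c GX + c P31" "eval c Vf = c P21"
  "eval c Vg = c GX + c P23" "eval c Vh = c GY + c P12" "eval c Vi = c P32"
  by (simp_all add: eval_def UNIV_gen gen_elem_gv)

lemma eval_addv: "eval (addv c e) = (\<lambda>v. eval c v + eval e v)"
  by (simp add: eval_def addv_def sum.distrib algebra_simps fun_eq_iff)

lemma rel_eval: "rel c d \<Longrightarrow> eval c = eval d"
proof (induction rule: rel.induct)
  case base
  then show ?case by (simp add: tri_eq eval_vals eval_addv unit_vec_def)
next
  case (add c d e)
  then show ?case by (simp add: eval_addv)
qed auto

definition stepn :: "(gen \<Rightarrow> nat) \<Rightarrow> nat \<Rightarrow> gen \<Rightarrow> nat" where
  "stepn c n = (\<lambda>h. if h = GX \<or> h = GY then c h - n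
      else if h = P12 \<or> h = P23 \<or> h = P31 then c h + n else c h)"

lemma rel_stepn: "n \<le> c GX \<Longrightarrow> n \<le> c GY \<Longrightarrow> rel c (stepn c n)"
proof (induction n)
  case 0
  have "stepn c 0 = c" by (simp add: stepn_def fun_eq_iff)
  then show ?case using rel.refl by simp
next
  case (Suc n)
  define e where "e = (stepn c (Suc n)) (P12 := c P12 + n, P23 := c P23 + n, P31 := c P31 + n)"
  have r: "rel (addv (addv (unit_vec GX) (unit_vec GY)) e)
     (addv (addv (unit_vec P12) (addv (unit_vec P23) (unit_vec P31))) e)"
    by (rule rel.add[OF rel.base])
  have 1: "stepn c n = addv (addv (unit_vec GX) (unit_vec GY)) e"
    using Suc.prems by (simp add: gfun_eq stepn_def e_def addv_def unit_vec_def) arith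
  have 2: "stepn c (Suc n) = addv (addv (unit_vec P12) (addv (unit_vec P23) (unit_vec P31))) e"
    using Suc.prems by (simp add: gfun_eq stepn_def e_def addv_def unit_vec_def)
  show ?case using Suc rel.trans r 1 2 by (metis Suc_leD)
qed

lemma nf_unique:
  assumes "min (c GX) (c GY) = 0" "min (d GX) (d GY) = 0" "eval c = eval d"
  shows "c = d"
proof -
  from assms(3) have "eval c Va = eval d Va" "eval c Vb = eval d Vb" "eval c Vc = eval d Vc"
     "eval c Vd = eval d Vd" "eval c Ve = eval d Ve" "eval c Vf = eval d Vf"
     "eval c Vg = eval d Vg" "eval c Vh = eval d Vh" "eval c Vi = eval d Vi" by auto
  then show ?thesis using assms(1,2) unfolding eval_vals gfun_eq by arith
qed

lemma eq_rel:
  assumes "eval c = eval d" shows "rel c d"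
proof -
  let ?c = "stepn c (min (c GX) (c GY))" and ?d = "stepn d (min (d GX) (d GY))"
  have rc: "rel c ?c" by (rule rel_stepn) auto
  have rd: "rel d ?d" by (rule rel_stepn) auto
  have "?c = ?d"
    apply (rule nf_unique)
    using rel_eval[OF rc] rel_eval[OF rd] assms by (auto simp: stepn_def)
  then show ?thesis using rc rd rel.sym rel.trans by metis
qed

lemma surj: "t \<in> BZ \<Longrightarrow> t \<in> range eval"
proof -
  assume "t \<in> BZ"
  then have h: "hexagon t" by (simp add: BZ_def)
  define x where "x = t Vg - t Vc"
  define c where "c = (\<lambda>g. case g of GX \<Rightarrow> x | GY \<Rightarrow> t Vc + x - t Vg
     | P12 \<Rightarrow> t Vb - x | P23 \<Rightarrow> t Vg - x | P31 \<Rightarrow> t Ve - x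
     | P21 \<Rightarrow> t Vf | P32 \<Rightarrow> t Vi | P13 \<Rightarrow> t Va)"
  have "eval c = t" using h unfolding tri_eq eval_vals c_def x_def hexagon_def by auto
  then show ?thesis by (metis rangeI)
qed

theorem mainTheorem4:
  shows "(\<forall>g. \<exists>!t. t \<in> BZ \<and> bweights t = gen_wts g)
       \<and> range eval = BZ
       \<and> (\<forall>c d. eval c = eval d \<longleftrightarrow> rel c d)"
proof (intro conjI allI)
  fix g show "\<exists>!t. t \<in> BZ \<and> bweights t = gen_wts g" unfolding gen_char by simp
next
  show "range eval = BZ"
  proof
    show "range eval \<subseteq> BZ" by (auto simp: BZ_def hexagon_def eval_vals)
    show "BZ \<subseteq> range eval" using surj by blast
  qed
next
  fix c d show "eval c = eval d \<longleftrightarrow> rel c d" using eq_rel rel_eval by blast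
qed

end
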